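(* Let $A\in\mathbb{C}^{n\times n}$, let $\|\cdot\|$ be an arbitrary vector norm on $\mathbb{C}^n$ (with induced matrix norm also denoted $\|\cdot\|$), let $y_0\in\mathbb{C}^n\setminus\{0\}$ and let $\hat z_0\in\mathbb{C}^n$ with $\|\hat z_0\|=1$. Assume that both $y_0$ and $\hat z_0$ satisfy the RLGE condition. Then, as $t\to+\infty$, $$K(t,y_0,\hat z_0)\sim \frac{\|Q_1(t)\hat z_0\|}{\|Q_1(t)\hat y_0\|}\qquad\text{and}\qquad K(t,y_0)\sim \frac{\|Q_1(t)\|}{\|Q_1(t)\hat y_0\|}.$$
   Context: Notation: $\hat y_0=y_0/\|y_0\|$. For $t\in\mathbb{R}$ and unit $\hat z_0$, the directional condition number is $K(t,y_0,\hat z_0)=\|e^{tA}\hat z_0\|/\|e^{tA}\hat y_0\|$ and the condition number is $K(t,y_0)=\max_{\|\hat z_0\|=1}K(t,y_0,\hat z_0)=\|e^{tA}\|/\|e^{tA}\hat y_0\|$. Let $\lambda_1,\dots,\lambda_p$ be the distinct eigenvalues of $A$, $\omega_i=\operatorname{Im}\lambda_i$. Fix a Jordan basis $v^{(i,j,k)}$, $i\in\{1,\dots,p\}$, $j\in\{1,\dots,d_i\}$ ($d_i$ the geometric multiplicity of $\lambda_i$), $k\in\{1,\dots,m_{ij}\}$, consisting of Jordan chains: $(A-\lambda_iI)v^{(i,j,1)}=0$ and $(A-\lambda_iI)v^{(i,j,k)}=v^{(i,j,k-1)}$ for $k\ge 2$. Let $V$ be the matrix whose columns are the $v^{(i,j,k)}$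 ordered lexicographically in $(i,j,k)$, and let $w^{(i,j,k)}$ be the rows of $V^{-1}$ in the same order. For $u\in\mathbb{C}^n$, $\alpha_{ijk}(u)=w^{(i,j,k)}u$ is the component of $u$ along $v^{(i,j,k)}$. $\Lambda_1$ denotes the set of eigenvalues of $A$ with maximal real part, and $M_1=\max_{\lambda_i\in\Lambda_1}\max_{j}m_{ij}$. Define $$Q_1(t)=\sum_{\lambda_i\in\Lambda_1,\ j\in\{1,\dots,d_i\},\ m_{ij}=M_1} e^{\sqrt{-1}\,\omega_i t}\,v^{(i,j,1)}w^{(i,j,M_1)}\in\mathbb{C}^{n\times n}.$$ A vector $u\in\mathbb{C}^n$ satisfies the Rightmost Last Generalized Eigenvectors (RLGE) condition if $\alpha_{ijM_1}(u)\neq 0$ for some $(i,j)$ with $\lambda_i\in\Lambda_1$ and $m_{ij}=M_1$. Asymptotic equivalence: $a(t)\sim b(t)$ as $t\to+\infty$ means $\lim_{t\to+\infty}a(t)/b(t)=1$. *)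

theory Defs
  imports "HOL-Analysis.Analysis"
begin

definition is_vec_norm :: "(complex ^ 'n \<Rightarrow> real) \<Rightarrow> bool" where
  "is_vec_norm N \<longleftrightarrow>
     (\<forall>x. 0 \<le> N x) \<and> (\<forall>x. N x = 0 \<longleftrightarrow> x = 0) \<and>
     (\<forall>c x. N (c *s x) = cmod c * N x) \<and> (\<forall>x y. N (x + y) \<le> N x + N y)"

definition induced_norm :: "(complex ^ 'n \<Rightarrow> real) \<Rightarrow> (complex ^ 'n \<Rightarrow> complex ^ 'n) \<Rightarrow> real" where
  "induced_norm N f = (SUP x\<in>{x. N x = 1}. N (f x))"

definition expmv :: "real \<Rightarrow> complex ^ 'n ^ 'n \<Rightarrow> complex ^ 'n \<Rightarrow> complex ^ 'n" where
  "expmv t A x = (\<Sum>k. complex_of_real (t ^ k / fact k) *s (((\<lambda>u. A *v u) ^^ k) x))"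

definition normalize_vec :: "(complex ^ 'n \<Rightarrow> real) \<Rightarrow> complex ^ 'n \<Rightarrow> complex ^ 'n" where
  "normalize_vec N y = complex_of_real (1 / N y) *s y"

definition Kdir :: "(complex ^ 'n \<Rightarrow> real) \<Rightarrow> complex ^ 'n ^ 'n \<Rightarrow> real \<Rightarrow> complex ^ 'n \<Rightarrow> complex ^ 'n \<Rightarrow> real" where
  "Kdir N A t y0 z0 = N (expmv t A z0) / N (expmv t A (normalize_vec N y0))"

definition Kcond :: "(complex ^ 'n \<Rightarrow> real) \<Rightarrow> complex ^ 'n ^ 'n \<Rightarrow> real \<Rightarrow> complex ^ 'n \<Rightarrow> real" where
  "Kcond N A t y0 = (SUP z\<in>{z. N z = 1}. Kdir N A t y0 z)"

definition jidx :: "'c set \<Rightarrow> ('c \<Rightarrow> nat) \<Rightarrow> ('c \<times> nat) set" where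
  "jidx C m = {(c, k). c \<in> C \<and> 1 \<le> k \<and> k \<le> m c}"

definition is_jordan_basis ::
  "complex ^ 'n ^ 'n \<Rightarrow> 'c set \<Rightarrow> ('c \<Rightarrow> complex) \<Rightarrow> ('c \<Rightarrow> nat) \<Rightarrow> ('c \<times> nat \<Rightarrow> complex ^ 'n) \<Rightarrow> bool" where
  "is_jordan_basis A C lam m v \<longleftrightarrow>
     finite C \<and> (\<forall>c\<in>C. 1 \<le> m c) \<and>
     (\<forall>c\<in>C. A *v v (c, 1) - lam c *s v (c, 1) = 0) \<and>
     (\<forall>c\<in>C. \<forall>k. 2 \<le> k \<and> k \<le> m c \<longrightarrow> A *v v (c, k) - lam c *s v (c, k) = v (c, k - 1)) \<and>
     (\<forall>u. \<exists>!\<alpha>. (\<forall>p. p \<notin> jidx C m \<longrightarrow> \<alpha> p = 0) \<and> u = (\<Sum>p\<in>jidx C m. \<alpha> p *s v p))"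

definition jcoord :: "'c set \<Rightarrow> ('c \<Rightarrow> nat) \<Rightarrow> ('c \<times> nat \<Rightarrow> complex ^ 'n) \<Rightarrow> complex ^ 'n \<Rightarrow> 'c \<times> nat \<Rightarrow> complex" where
  "jcoord C m v u = (THE \<alpha>. (\<forall>p. p \<notin> jidx C m \<longrightarrow> \<alpha> p = 0) \<and> u = (\<Sum>p\<in>jidx C m. \<alpha> p *s v p))"

definition max_re :: "'c set \<Rightarrow> ('c \<Rightarrow> complex) \<Rightarrow> real" where
  "max_re C lam = Max ((\<lambda>c. Re (lam c)) ` C)"

definition M1 :: "'c set \<Rightarrow> ('c \<Rightarrow> complex) \<Rightarrow> ('c \<Rightarrow> nat) \<Rightarrow> nat" where
  "M1 C lam m = Max (m ` {c\<in>C. Re (lam c) = max_re C lam})"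

definition C1 :: "'c set \<Rightarrow> ('c \<Rightarrow> complex) \<Rightarrow> ('c \<Rightarrow> nat) \<Rightarrow> 'c set" where
  "C1 C lam m = {c\<in>C. Re (lam c) = max_re C lam \<and> m c = M1 C lam m}"

definition Q1 :: "'c set \<Rightarrow> ('c \<Rightarrow> complex) \<Rightarrow> ('c \<Rightarrow> nat) \<Rightarrow> ('c \<times> nat \<Rightarrow> complex ^ 'n) \<Rightarrow> real \<Rightarrow> complex ^ 'n \<Rightarrow> complex ^ 'n" where
  "Q1 C lam m v t u = (\<Sum>c\<in>C1 C lam m.
      (exp (\<i> * complex_of_real (Im (lam c) * t)) * jcoord C m v u (c, M1 C lam m)) *s v (c, 1))"

definition RLGE :: "'c set \<Rightarrow> ('c \<Rightarrow> complex) \<Rightarrow> ('c \<Rightarrow> nat) \<Rightarrow> ('c \<times> nat \<Rightarrow> complex ^ 'n) \<Rightarrow> complex ^ 'n \<Rightarrow> bool" where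
  "RLGE C lam m v u \<longleftrightarrow> (\<exists>c\<in>C1 C lam m. jcoord C m v u (c, M1 C lam m) \<noteq> 0)"

end

theory Submission
  imports Defs "HOL-Real_Asymp.Real_Asymp"
begin

lemma norm_smult_cvec: "norm ((c::complex) *s (x::complex^'n)) = cmod c * norm x"
  unfolding norm_vec_def by (simp add: norm_mult L2_set_right_distrib)

lemma scaleR_cvec: "(r::real) *\<^sub>R (x::complex^'n) = complex_of_real r *s x"
  unfolding vec_eq_iff vector_scaleR_component vector_smult_component
  by (simp only: scaleR_conv_of_real) simp

lemma bl_smult_right: "bounded_linear (\<lambda>x::complex^'n. c *s x)"
  by (rule bounded_linear_intro[of _ "cmod c"])
     (auto simp: vector_add_ldistrib norm_smult_cvec scaleR_cvec vector_smult_assoc mult.commute)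

lemma bl_smult_left: "bounded_linear (\<lambda>c::complex. c *s (w::complex^'n))"
  by (rule bounded_linear_intro[of _ "norm w"])
     (auto simp: vector_sadd_rdistrib norm_smult_cvec scaleR_cvec vector_smult_assoc scaleR_conv_of_real)

lemma sums_smult_right: "f sums S \<Longrightarrow> (\<lambda>n. c *s f n) sums (c *s (S::complex^'n))"
  by (rule bounded_linear.sums[OF bl_smult_right])

lemma sums_smult_left: "f sums S \<Longrightarrow> (\<lambda>n. f n *s (w::complex^'n)) sums (S *s w)"
  by (rule bounded_linear.sums[OF bl_smult_left])

lemma tendsto_smult_left: "(f \<longlongrightarrow> S) F \<Longrightarrow> ((\<lambda>n. f n *s (w::complex^'n)) \<longlongrightarrow> (S *s w)) F"
  by (rule bounded_linear.tendsto[OF bl_smult_left])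

locale vnorm =
  fixes N :: "complex ^ 'n \<Rightarrow> real"
  assumes isn: "is_vec_norm N"
begin

lemma N_nonneg: "0 \<le> N x" and N_eq0: "N x = 0 \<longleftrightarrow> x = 0"
  and N_smult: "N (c *s x) = cmod c * N x" and N_tri: "N (x + y) \<le> N x + N y"
  using isn unfolding is_vec_norm_def by auto

lemma N_0[simp]: "N 0 = 0" using N_eq0 by simp

lemma N_neg: "N (- x) = N x"
  using N_smult[of "-1" x] by (simp add: vector_sneg_minus1[symmetric])

lemma N_diff_tri: "N x - N y \<le> N (x - y)"
  using N_tri[of "x - y" y] by simp

lemma N_abs_diff: "\<bar>N x - N y\<bar> \<le> N (x - y)"
  using N_diff_tri[of x y] N_diff_tri[of y x] N_neg[of "x - y"] by (simp add: abs_le_iff)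

lemma N_scaleR: "N (r *\<^sub>R x) = \<bar>r\<bar> * N x"
  by (simp add: scaleR_cvec N_smult)

lemma N_sum: "N (sum f S) \<le> (\<Sum>i\<in>S. N (f i))"
proof (induction S rule: infinite_finite_induct)
  case (insert x F)
  then show ?case using N_tri[of "f x" "sum f F"] by simp
qed auto

definition KN where "KN = (\<Sum>i\<in>UNIV. N (axis i 1))"

lemma N_le: "N x \<le> KN * norm x"
proof -
  have "N x = N (\<Sum>i\<in>UNIV. x$i *s axis i 1)" by (simp add: basis_expansion)
  also have "\<dots> \<le> (\<Sum>i\<in>UNIV. N (x$i *s axis i 1))" by (rule N_sum)
  also have "\<dots> = (\<Sum>i\<in>UNIV. cmod (x$i) * N (axis i 1))" by (simp add: N_smult)
  also have "\<dots> \<le> (\<Sum>i\<in>UNIV. norm x * N (axis i 1))"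
    by (intro sum_mono mult_right_mono Finite_Cartesian_Product.norm_nth_le N_nonneg)
  finally show ?thesis by (simp add: KN_def sum_distrib_left mult.commute)
qed

lemma N_cont: "continuous_on S N"
proof -
  have "\<bar>N y - N x\<bar> \<le> KN * norm (y - x)" for x y
    using N_abs_diff[of y x] N_le[of "y - x"] by linarith
  hence "N y - N x \<le> KN * norm (y - x)" "N x - N y \<le> KN * norm (y - x)" for x y
    by (auto simp: abs_le_iff)
  moreover have "KN \<ge> 0" unfolding KN_def by (simp add: sum_nonneg N_nonneg)
  ultimately have "KN-lipschitz_on S N"
    by (intro lipschitz_onI) (auto simp: dist_norm abs_le_iff dist_real_def)
  then show ?thesis by (rule lipschitz_on_continuous_on)
qed

lemma N_ge: "\<exists>k>0. \<forall>x. k * norm x \<le> N x"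
proof -
  have "sphere (0::complex^'n) 1 \<noteq> {}"
  proof -
    have "axis undefined 1 \<in> sphere (0::complex^'n) 1" by (simp add: norm_axis_1)
    thus ?thesis by blast
  qed
  then obtain x0 where x0: "x0 \<in> sphere 0 1" "\<And>y. y \<in> sphere 0 1 \<Longrightarrow> N x0 \<le> N y"
    using continuous_attains_inf[OF compact_sphere _ N_cont] by blast
  have "x0 \<noteq> 0" using x0(1) by auto
  hence pos: "N x0 > 0" using N_eq0 N_nonneg[of x0] by (simp add: order_less_le)
  have "N x0 * norm x \<le> N x" for x
  proof (cases "x = 0")
    case False
    have "x = norm x *\<^sub>R ((1 / norm x) *\<^sub>R x)" using False by simp
    hence "N x = norm x * N ((1 / norm x) *\<^sub>R x)" by (metis N_scaleR abs_norm_cancel)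
    moreover have "N x0 \<le> N ((1 / norm x) *\<^sub>R x)" using False by (intro x0(2)) auto
    ultimately show ?thesis by (metis mult.commute mult_left_mono norm_ge_zero)
  qed simp
  thus ?thesis using pos by blast
qed

end
lemma smult_sum_cvec: "(c::complex) *s sum f S = (\<Sum>p\<in>S. c *s (f p :: complex^'n))"
proof (induction S rule: infinite_finite_induct)
  case (insert x F) then show ?case by (simp add: vector_add_ldistrib)
qed auto

locale jordan =
  fixes A :: "complex^'n^'n" and C :: "'c set" and lam :: "'c \<Rightarrow> complex"
    and m :: "'c \<Rightarrow> nat" and v :: "'c \<times> nat \<Rightarrow> complex^'n"
  assumes jb: "is_jordan_basis A C lam m v"
begin

abbreviation "J \<equiv> jidx C m"
abbreviation "\<alpha> \<equiv> jcoord C m v"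

lemma finC: "finite C" and m_pos: "c \<in> C \<Longrightarrow> 1 \<le> m c"
  and chain1: "c \<in> C \<Longrightarrow> A *v v (c,1) = lam c *s v (c,1)"
  and chainS: "c \<in> C \<Longrightarrow> 2 \<le> k \<Longrightarrow> k \<le> m c \<Longrightarrow> A *v v (c,k) = lam c *s v (c,k) + v (c, k - 1)"
  and uniq: "\<exists>!\<beta>. (\<forall>p. p \<notin> J \<longrightarrow> \<beta> p = 0) \<and> u = (\<Sum>p\<in>J. \<beta> p *s v p)"
  using jb unfolding is_jordan_basis_def by (auto simp: algebra_simps)

lemma J_Sigma: "J = Sigma C (\<lambda>c. {1..m c})"
  by (auto simp: jidx_def)

lemma finJ: "finite J"
  unfolding J_Sigma using finC by auto

lemma coord_both: "(\<forall>p. p \<notin> J \<longrightarrow> \<alpha> u p = 0) \<and> u = (\<Sum>p\<in>J. \<alpha> u p *s v p)"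
  unfolding jcoord_def by (rule theI'[OF uniq])

lemma coord_0: "p \<notin> J \<Longrightarrow> \<alpha> u p = 0" and coord_repr: "u = (\<Sum>p\<in>J. \<alpha> u p *s v p)"
  using coord_both[of u] by blast+

lemma coord_unique: "(\<And>p. p \<notin> J \<Longrightarrow> \<beta> p = 0) \<Longrightarrow> u = (\<Sum>p\<in>J. \<beta> p *s v p) \<Longrightarrow> \<alpha> u = \<beta>"
  unfolding jcoord_def by (rule the1_equality[OF uniq]) auto

lemma coord_add: "\<alpha> (x + y) = (\<lambda>p. \<alpha> x p + \<alpha> y p)"
proof (rule coord_unique)
  show "x + y = (\<Sum>p\<in>J. (\<alpha> x p + \<alpha> y p) *s v p)"
    by (subst coord_repr[of x], subst coord_repr[of y]) (simp add: vector_sadd_rdistrib sum.distrib)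
qed (simp add: coord_0)

lemma coord_smult: "\<alpha> (c *s x) = (\<lambda>p. c * \<alpha> x p)"
proof (rule coord_unique)
  show "c *s x = (\<Sum>p\<in>J. (c * \<alpha> x p) *s v p)"
    by (subst coord_repr[of x]) (simp add: smult_sum_cvec vector_smult_assoc)
qed (simp add: coord_0)

lemma coord_bounded: "\<exists>B>0. \<forall>x. cmod (\<alpha> x p) \<le> B * norm x"
proof -
  have "linear (\<lambda>x. \<alpha> x p)"
    by (rule linearI) (simp_all add: coord_add scaleR_cvec coord_smult scaleR_conv_of_real)
  then have "bounded_linear (\<lambda>x. \<alpha> x p)" by (simp add: linear_conv_bounded_linear)
  from bounded_linear.pos_bounded[OF this] show ?thesis by (auto simp: mult.commute)
qed

definition Ap :: "nat \<Rightarrow> complex^'n \<Rightarrow> complex^'n" where "Ap n = ((\<lambda>u. A *v u) ^^ n)"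

lemma Ap_0: "Ap 0 x = x" and Ap_Suc: "Ap (Suc n) x = A *v Ap n x"
  by (simp_all add: Ap_def)

lemma Ap_lin: "Ap n (\<Sum>p\<in>S. f p *s w p) = (\<Sum>p\<in>S. f p *s Ap n (w p))"
  by (induction n) (simp_all add: Ap_0 Ap_Suc vec.sum vec.scale)

lemma binom_step:
  "of_nat (Suc n choose j) * (l::complex) ^ (Suc n - j) =
     (of_nat (n choose j) * l ^ (n - j)) * l + (if 1 \<le> j then of_nat (n choose (j - 1)) * l ^ (n - (j - 1)) else 0)"
proof (cases j)
  case 0 then show ?thesis by simp
next
  case (Suc i)
  have "of_nat (n choose Suc i) * l ^ (n - Suc i) * l = of_nat (n choose Suc i) * l ^ (n - i)"
  proof (cases "Suc i \<le> n")
    case True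
    then have "n - i = Suc (n - Suc i)" by simp
    then show ?thesis by (simp add: mult.assoc mult.commute)
  next
    case False then show ?thesis by simp
  qed
  note H = this
  have "of_nat (Suc n choose j) * l ^ (Suc n - j) = of_nat (n choose i) * l^(n-i) + of_nat (n choose Suc i) * l ^ (n - i)"
    using Suc by (simp add: distrib_right)
  also have "\<dots> = (of_nat (n choose j) * l ^ (n - j)) * l + of_nat (n choose (j - 1)) * l ^ (n - (j - 1))"
    unfolding Suc diff_Suc_1 H by (rule add.commute)
  finally show ?thesis using Suc by simp
qed

lemma Ap_chain:
  assumes c: "c \<in> C"
  shows "1 \<le> k \<Longrightarrow> k \<le> m c \<Longrightarrow>
    Ap n (v (c,k)) = (\<Sum>j<k. (of_nat (n choose j) * lam c ^ (n - j)) *s v (c, k - j))"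
proof (induction n arbitrary: k)
  case 0
  have "(\<Sum>j<k. (of_nat (0 choose j) * lam c ^ (0 - j)) *s v (c, k - j))
      = (\<Sum>j<k. if j = 0 then v (c, k) else 0)"
    by (rule sum.cong) auto
  also have "\<dots> = v (c,k)" using 0 by simp
  finally show ?case by (simp add: Ap_0)
next
  case (Suc n)
  define a where "a j = of_nat (n choose j) * lam c ^ (n - j)" for j
  have Av: "A *v v (c, k - j) = lam c *s v (c, k - j) + (if j + 2 \<le> k then v (c, k - (j+1)) else 0)"
    if "j < k" for j
  proof (cases "j + 2 \<le> k")
    case True
    then show ?thesis using chainS[OF c, of "k - j"] Suc.prems by (simp add: diff_diff_add)
  next
    case False
    then have "k - j = 1" using that by simp
    then show ?thesis using chain1[OF c] False by simp
  qed
  have "Ap (Suc n) (v (c,k)) = (\<Sum>j<k. a j *s (A *v v (c, k - j)))"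
    using Suc.IH[OF Suc.prems] by (simp add: Ap_Suc a_def vec.sum vec.scale)
  also have "\<dots> = (\<Sum>j<k. (a j * lam c) *s v (c, k - j)) + (\<Sum>j<k. if j + 2 \<le> k then a j *s v (c, k - (j+1)) else 0)"
    unfolding sum.distrib[symmetric] by (rule sum.cong) (auto simp: Av vector_add_ldistrib vector_smult_assoc)
  also have "(\<Sum>j<k. if j + 2 \<le> k then a j *s v (c, k - (j+1)) else 0)
      = (\<Sum>j<k. (if 1 \<le> j then a (j - 1) else 0) *s v (c, k - j))"
  proof -
    obtain k' where k': "k = Suc k'" using Suc.prems by (cases k) auto
    have "(\<Sum>j<k. if j + 2 \<le> k then a j *s v (c, k - (j+1)) else 0) = (\<Sum>j<k'. a j *s v (c, k - (j+1)))"
      unfolding k' sum.lessThan_Suc by (simp cong: sum.cong_simp)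
    also have "\<dots> = (\<Sum>j<k. (if 1 \<le> j then a (j - 1) else 0) *s v (c, k - j))"
      unfolding k' sum.lessThan_Suc_shift by simp
    finally show ?thesis .
  qed
  also have "(\<Sum>j<k. (a j * lam c) *s v (c, k - j)) + \<dots>
     = (\<Sum>j<k. (of_nat (Suc n choose j) * lam c ^ (Suc n - j)) *s v (c, k - j))"
    unfolding sum.distrib[symmetric] by (rule sum.cong) (simp_all only: binom_step a_def vector_sadd_rdistrib)
  finally show ?case .
qed

end
lemma coef_sums:
  "(\<lambda>n. complex_of_real (t^n / fact n) * (of_nat (n choose j) * l ^ (n - j))) sums (exp (of_real t * l) * of_real (t^j / fact j))"
proof -
  define f where "f n = complex_of_real (t^n / fact n) * (of_nat (n choose j) * l ^ (n - j))" for n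
  have f0: "f n = 0" if "n < j" for n using that by (simp add: f_def)
  have fs: "f (n + j) = of_real (t^j / fact j) * ((of_real t * l)^n /\<^sub>R fact n)" for n
  proof -
    have "(of_nat ((n + j) choose j) :: complex) = fact (n+j) / (fact j * fact n)"
      by (subst binomial_fact) auto
    then show ?thesis by (simp add: f_def power_add power_mult_distrib field_simps scaleR_conv_of_real)
  qed
  have "(\<lambda>n. f (n + j)) sums (of_real (t^j / fact j) * exp (of_real t * l))"
    unfolding fs by (intro sums_mult exp_converges)
  then have "f sums (of_real (t^j / fact j) * exp (of_real t * l) + sum f {..<j})"
    by (simp add: sums_iff_shift)
  moreover have "sum f {..<j} = 0" by (simp add: f0)
  ultimately have "f sums (exp (of_real t * l) * of_real (t^j / fact j))" by (simp add: mult.commute)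
  moreover have "f = (\<lambda>n. complex_of_real (t^n / fact n) * (of_nat (n choose j) * l ^ (n - j)))"
    by (rule ext) (simp add: f_def)
  ultimately show ?thesis by simp
qed

context jordan begin

definition Phi :: "'c \<times> nat \<Rightarrow> real \<Rightarrow> complex^'n" where
  "Phi p t = (\<Sum>j<snd p. (exp (of_real t * lam (fst p)) * of_real (t^j / fact j)) *s v (fst p, snd p - j))"

lemma Phi_sums:
  assumes "p \<in> J"
  shows "(\<lambda>n. complex_of_real (t^n / fact n) *s Ap n (v p)) sums Phi p t"
proof -
  obtain c k where p: "p = (c,k)" and c: "c \<in> C" and k: "1 \<le> k" "k \<le> m c"
    using assms by (auto simp: jidx_def)
  have "(\<lambda>n. complex_of_real (t^n / fact n) *s Ap n (v p)) =
        (\<lambda>n. \<Sum>j<k. (complex_of_real (t^n / fact n) * (of_nat (n choose j) * lam c ^ (n - j))) *s v (c, k - j))"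
    by (simp add: p Ap_chain[OF c k] smult_sum_cvec vector_smult_assoc)
  also have "\<dots> sums Phi p t"
    unfolding p Phi_def fst_conv snd_conv by (intro sums_sum sums_smult_left coef_sums)
  finally show ?thesis .
qed

lemma expmv_repr: "expmv t A u = (\<Sum>p\<in>J. \<alpha> u p *s Phi p t)"
proof -
  have "Ap n u = (\<Sum>p\<in>J. \<alpha> u p *s Ap n (v p))" for n
    using arg_cong[OF coord_repr[of u], of "Ap n"] by (simp add: Ap_lin)
  then have "(\<lambda>n. complex_of_real (t^n / fact n) *s Ap n u) =
      (\<lambda>n. \<Sum>p\<in>J. \<alpha> u p *s (complex_of_real (t^n / fact n) *s Ap n (v p)))"
    by (simp add: smult_sum_cvec vector_smult_assoc mult.commute)
  also have "\<dots> sums (\<Sum>p\<in>J. \<alpha> u p *s Phi p t)"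
    by (intro sums_sum sums_smult_right Phi_sums)
  finally show ?thesis unfolding expmv_def Ap_def[symmetric] by (rule sums_unique[symmetric])
qed

end
locale jordan1 = jordan +
  assumes C1ne: "C1 C lam m \<noteq> {}"
begin

abbreviation "mu \<equiv> max_re C lam"
abbreviation "M \<equiv> M1 C lam m"
abbreviation "CC \<equiv> C1 C lam m"

lemma re_le: "c \<in> C \<Longrightarrow> Re (lam c) \<le> mu"
  unfolding max_re_def using finC by (intro Max_ge) auto

lemma CC_iff: "c \<in> CC \<longleftrightarrow> c \<in> C \<and> Re (lam c) = mu \<and> m c = M"
  by (simp add: C1_def)

lemma m_le: "c \<in> C \<Longrightarrow> Re (lam c) = mu \<Longrightarrow> m c \<le> M"
  unfolding M1_def using finC by (intro Max_ge) auto

lemma M_pos: "1 \<le> M"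
proof -
  obtain c where "c \<in> CC" using C1ne by blast
  then show ?thesis using m_pos CC_iff by force
qed

definition s :: "real \<Rightarrow> real" where "s t = exp (mu * t) * t^(M-1) / fact (M-1)"

lemma s_pos: "t > 0 \<Longrightarrow> s t > 0"
  by (simp add: s_def)

definition ee where "ee c t = exp (\<i> * complex_of_real (Im (lam c) * t))"

lemma norm_ee: "cmod (ee c t) = 1" by (simp add: ee_def norm_exp_i_times)

lemma exp_split: "exp (complex_of_real t * lam c) = complex_of_real (exp (t * Re (lam c))) * ee c t"
proof -
  have "complex_of_real t * lam c = complex_of_real (t * Re (lam c)) + \<i> * complex_of_real (Im (lam c) * t)"
    by (simp add: complex_eq_iff)
  then show ?thesis by (simp only: ee_def exp_add exp_of_real)
qed

definition r where
  "r c j t = (fact (M-1) / fact j) * (exp (t * Re (lam c)) / exp (mu * t) * t^j / t^(M-1))"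

lemma coef_eq:
  assumes t: "t > 0"
  shows "complex_of_real (1 / s t) * (exp (complex_of_real t * lam c) * complex_of_real (t^j / fact j))
     = complex_of_real (r c j t) * ee c t"
proof -
  have eq: "1 / s t * exp (t * Re (lam c)) * (t^j / fact j) = r c j t"
    using t by (simp add: s_def r_def field_simps)
  have "complex_of_real (1 / s t) * (exp (complex_of_real t * lam c) * complex_of_real (t^j / fact j))
      = complex_of_real (1 / s t * exp (t * Re (lam c)) * (t^j / fact j)) * ee c t"
    unfolding exp_split of_real_mult by (simp add: mult_ac)
  then show ?thesis by (simp only: eq)
qed

lemma r_lim:
  assumes c: "c \<in> C" and jk: "j < k" "k \<le> m c" and ns: "\<not> (c \<in> CC \<and> k = M \<and> j = M - 1)"
  shows "(r c j \<longlongrightarrow> 0) at_top"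
proof (cases "Re (lam c) < mu")
  case True
  define a where "a = mu - Re (lam c)"
  have a: "a > 0" using True by (simp add: a_def)
  have eq: "r c j = (\<lambda>t. (fact (M-1) / fact j) * (exp (-a*t) * t^j / t^(M-1)))"
    by (rule ext) (simp add: r_def a_def exp_diff[symmetric] algebra_simps)
  have lim: "((\<lambda>t. exp (-a*t) * t^j / t^d) \<longlongrightarrow> 0) at_top" for d
    using a by real_asymp
  show ?thesis unfolding eq by (rule tendsto_mult_right_zero) (rule lim)
next
  case False
  then have re: "Re (lam c) = mu" using re_le[OF c] by simp
  have "m c \<le> M" using m_le[OF c re] .
  have "j < M - 1"
  proof (rule ccontr)
    assume "\<not> j < M - 1"
    then have "j = M - 1" "k = M" "m c = M" using jk \<open>m c \<le> M\<close> by auto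
    then show False using ns c re CC_iff by auto
  qed
  have tl: "((\<lambda>t::real. t^j / t^d) \<longlongrightarrow> 0) at_top" if "j < d" for d
    using that by real_asymp
  have eq: "r c j = (\<lambda>t. (fact (M-1) / fact j) * (t^j / t^(M-1)))"
    by (rule ext) (simp add: r_def re mult.commute)
  show ?thesis unfolding eq by (rule tendsto_mult_right_zero) (rule tl[OF \<open>j < M - 1\<close>])
qed

definition g where
  "g p t = complex_of_real (1 / s t) *s Phi p t
     - (if fst p \<in> CC \<and> snd p = M then ee (fst p) t *s v (fst p, 1) else 0)"

lemma g_lim:
  assumes p: "p \<in> J"
  shows "(g p \<longlongrightarrow> 0) at_top"
proof -
  obtain c k where pck: "p = (c,k)" and c: "c \<in> C" and k: "1 \<le> k" "k \<le> m c"
    using p by (auto simp: jidx_def)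
  define h where "h j t = complex_of_real (r c j t) * ee c t - (if c \<in> CC \<and> k = M \<and> j = M - 1 then ee c t else 0)" for j t
  have sel: "(if c \<in> CC \<and> k = M then ee c t *s v (c, 1) else 0)
      = (\<Sum>j<k. (if c \<in> CC \<and> k = M \<and> j = M - 1 then ee c t else 0) *s v (c, k - j))" for t
  proof (cases "c \<in> CC \<and> k = M")
    case True
    have "(\<Sum>j<k. (if c \<in> CC \<and> k = M \<and> j = M - 1 then ee c t else 0) *s v (c, k - j))
        = (\<Sum>j<k. if j = M - 1 then ee c t *s v (c, k - j) else 0)"
      by (rule sum.cong) (auto simp: True)
    also have "\<dots> = ee c t *s v (c, 1)" using True M_pos by simp
    finally show ?thesis using True by simp
  next
    case False
    then have "(if c \<in> CC \<and> k = M \<and> j = M - 1 then ee c t else 0) = 0" for j by auto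
    then have "(\<Sum>j<k. (if c \<in> CC \<and> k = M \<and> j = M - 1 then ee c t else 0) *s v (c, k - j)) = 0"
      by (simp only: vector_smult_lzero sum.neutral_const)
    then show ?thesis using False by auto
  qed
  have ev: "g p t = (\<Sum>j<k. h j t *s v (c, k - j))" if t: "t > 0" for t
  proof -
    have e1: "complex_of_real (1 / s t) *s Phi (c,k) t = (\<Sum>j<k. (complex_of_real (r c j t) * ee c t) *s v (c, k - j))"
      by (simp only: Phi_def fst_conv snd_conv smult_sum_cvec vector_smult_assoc coef_eq[OF t])
    show ?thesis unfolding g_def pck fst_conv snd_conv e1 sel[of t] h_def
      by (simp only: vector_sub_rdistrib sum_subtractf)
  qed
  have hl: "(h j \<longlongrightarrow> 0) at_top" if j: "j < k" for j
  proof (cases "c \<in> CC \<and> k = M \<and> j = M - 1")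
    case True
    then have re: "Re (lam c) = mu" using CC_iff by auto
    have "eventually (\<lambda>t. h j t = 0) at_top"
      using eventually_gt_at_top[of 0]
    proof (rule eventually_mono)
      fix t :: real assume "t > 0"
      then have "r c j t = 1" using True by (simp add: r_def re)
      then show "h j t = 0" using True by (simp add: h_def)
    qed
    then show ?thesis by (rule tendsto_eventually)
  next
    case False
    have lim: "((\<lambda>t. \<bar>r c j t\<bar>) \<longlongrightarrow> 0) at_top"
      by (rule tendsto_rabs_zero, rule r_lim[OF c j k(2) False])
    have bd: "norm (h j t) \<le> \<bar>r c j t\<bar>" for t
      unfolding h_def if_not_P[OF False] by (simp add: norm_mult norm_ee)
    show ?thesis by (rule Lim_null_comparison[OF always_eventually lim]) (rule allI, rule bd)
  qed
  have "((\<lambda>t. \<Sum>j<k. h j t *s v (c, k - j)) \<longlongrightarrow> 0) at_top"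
  proof (rule tendsto_null_sum)
    fix j assume "j \<in> {..<k}"
    then have "j < k" by simp
    from tendsto_smult_left[OF hl[OF this], of "v (c, k - j)"]
    show "((\<lambda>t. h j t *s v (c, k - j)) \<longlongrightarrow> 0) at_top" by (simp only: vector_smult_lzero)
  qed
  moreover have "eventually (\<lambda>t. (\<Sum>j<k. h j t *s v (c, k - j)) = g p t) at_top"
    using eventually_gt_at_top[of 0] by (rule eventually_mono) (rule ev[symmetric])
  ultimately show ?thesis by (rule Lim_transform_eventually)
qed

end
context jordan1 begin

lemma CC_sub: "CC \<subseteq> C" using CC_iff by auto

lemma sum_J: "(\<Sum>p\<in>J. F p) = (\<Sum>c\<in>C. \<Sum>k\<in>{1..m c}. F (c,k))"
  unfolding J_Sigma by (subst sum.Sigma) (auto simp: finC)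

lemma sum_J_pick:
  assumes K: "\<And>c. c \<in> CC \<Longrightarrow> 1 \<le> K c \<and> K c \<le> m c"
  shows "(\<Sum>p\<in>J. if fst p \<in> CC \<and> snd p = K (fst p) then f p else 0) = (\<Sum>c\<in>CC. f (c, K c))"
proof -
  have "(\<Sum>p\<in>J. if fst p \<in> CC \<and> snd p = K (fst p) then f p else 0)
      = (\<Sum>c\<in>C. \<Sum>k\<in>{1..m c}. if c \<in> CC \<and> k = K c then f (c,k) else 0)"
    by (simp add: sum_J)
  also have "\<dots> = (\<Sum>c\<in>C. if c \<in> CC then f (c, K c) else 0)"
  proof (rule sum.cong[OF refl])
    fix c assume "c \<in> C"
    show "(\<Sum>k\<in>{1..m c}. if c \<in> CC \<and> k = K c then f (c,k) else 0) = (if c \<in> CC then f (c, K c) else 0)"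
    proof (cases "c \<in> CC")
      case True
      then have "(\<Sum>k\<in>{1..m c}. if c \<in> CC \<and> k = K c then f (c,k) else 0)
          = (\<Sum>k\<in>{1..m c}. if k = K c then f (c,k) else 0)" by simp
      also have "\<dots> = f (c, K c)" using K[OF True] by (simp add: sum.delta')
      finally show ?thesis using True by simp
    qed simp
  qed
  also have "\<dots> = (\<Sum>c\<in>CC. f (c, K c))"
  proof -
    have "{c \<in> C. c \<in> CC} = CC" using CC_sub by auto
    then show ?thesis using sum.inter_filter[OF finC, of "\<lambda>c. f (c, K c)" "\<lambda>c. c \<in> CC"] by simp
  qed
  finally show ?thesis .
qed

lemma K_M: "c \<in> CC \<Longrightarrow> 1 \<le> M \<and> M \<le> m c"
proof -
  assume "c \<in> CC"
  then have "m c = M" using CC_iff by blast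
  then show ?thesis using M_pos by simp
qed

lemma sum_J_pick_const:
  assumes K: "\<And>c. c \<in> CC \<Longrightarrow> 1 \<le> K0 \<and> K0 \<le> m c"
  shows "(\<Sum>p\<in>J. if fst p \<in> CC \<and> snd p = K0 then f p else 0) = (\<Sum>c\<in>CC. f (c, K0))"
  using sum_J_pick[of "\<lambda>_. K0" f] K by simp
lemma K_1: "c \<in> CC \<Longrightarrow> 1 \<le> (1::nat) \<and> 1 \<le> m c" using CC_sub m_pos by auto

lemma Q1_repr: "Q1 C lam m v t u = (\<Sum>p\<in>J. \<alpha> u p *s (if fst p \<in> CC \<and> snd p = M then ee (fst p) t *s v (fst p, 1) else 0))"
proof -
  have "(\<Sum>p\<in>J. \<alpha> u p *s (if fst p \<in> CC \<and> snd p = M then ee (fst p) t *s v (fst p, 1) else 0))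
     = (\<Sum>p\<in>J. if fst p \<in> CC \<and> snd p = M then \<alpha> u p *s (ee (fst p) t *s v (fst p, 1)) else 0)"
    by (rule sum.cong) auto
  also have "\<dots> = (\<Sum>c\<in>CC. \<alpha> u (c, M) *s (ee c t *s v (c, 1)))"
    by (subst sum_J_pick_const[of M]) (auto dest: K_M)
  also have "\<dots> = Q1 C lam m v t u"
    unfolding Q1_def ee_def by (simp add: vector_smult_assoc mult.commute)
  finally show ?thesis by simp
qed

lemma diff_repr: "complex_of_real (1 / s t) *s expmv t A u - Q1 C lam m v t u = (\<Sum>p\<in>J. \<alpha> u p *s g p t)"
  unfolding expmv_repr Q1_repr g_def smult_sum_cvec vector_ssub_ldistrib sum_subtractf
  by (simp add: vector_smult_assoc mult.commute)

definition Bc where "Bc p = (SOME B. B > 0 \<and> (\<forall>x. cmod (\<alpha> x p) \<le> B * norm x))"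

lemma Bc: "Bc p > 0" "cmod (\<alpha> x p) \<le> Bc p * norm x"
  using someI_ex[OF coord_bounded[of p]] unfolding Bc_def[symmetric] by auto

definition eps where "eps t = (\<Sum>p\<in>J. Bc p * norm (g p t))"

lemma eps_lim: "(eps \<longlongrightarrow> 0) at_top"
  unfolding eps_def
  by (intro tendsto_null_sum tendsto_mult_right_zero tendsto_norm_zero g_lim)

lemma eps_bound: "norm (complex_of_real (1 / s t) *s expmv t A u - Q1 C lam m v t u) \<le> eps t * norm u"
proof -
  have "norm (\<Sum>p\<in>J. \<alpha> u p *s g p t) \<le> (\<Sum>p\<in>J. norm (\<alpha> u p *s g p t))" by (rule norm_sum)
  also have "\<dots> = (\<Sum>p\<in>J. cmod (\<alpha> u p) * norm (g p t))" by (simp add: norm_smult_cvec)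
  also have "\<dots> \<le> (\<Sum>p\<in>J. Bc p * norm u * norm (g p t))"
    by (intro sum_mono mult_right_mono Bc) simp
  also have "\<dots> = eps t * norm u" by (simp add: eps_def sum_distrib_left mult_ac)
  finally show ?thesis by (simp only: diff_repr)
qed

definition BQ where "BQ = (\<Sum>c\<in>CC. Bc (c, M) * norm (v (c, 1)))"

lemma Q_upper: "norm (Q1 C lam m v t u) \<le> BQ * norm u"
proof -
  have "norm (Q1 C lam m v t u) \<le> (\<Sum>c\<in>CC. norm ((exp (\<i> * complex_of_real (Im (lam c) * t)) * \<alpha> u (c, M)) *s v (c, 1)))"
    unfolding Q1_def by (rule norm_sum)
  also have "\<dots> = (\<Sum>c\<in>CC. cmod (\<alpha> u (c, M)) * norm (v (c, 1)))"
    by (simp add: norm_smult_cvec norm_mult norm_exp_i_times)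
  also have "\<dots> \<le> (\<Sum>c\<in>CC. Bc (c, M) * norm u * norm (v (c, 1)))"
    by (intro sum_mono mult_right_mono Bc) simp
  also have "\<dots> = BQ * norm u" by (simp add: BQ_def sum_distrib_left mult_ac)
  finally show ?thesis .
qed

lemma Q_coord: "\<alpha> (Q1 C lam m v t u) = (\<lambda>p. if fst p \<in> CC \<and> snd p = 1 then ee (fst p) t * \<alpha> u (fst p, M) else 0)"
proof (rule coord_unique)
  fix p assume "p \<notin> J"
  then show "(if fst p \<in> CC \<and> snd p = 1 then ee (fst p) t * \<alpha> u (fst p, M) else 0) = 0"
    using CC_iff m_pos by (cases p) (auto simp: jidx_def)
next
  have "(\<Sum>p\<in>J. (if fst p \<in> CC \<and> snd p = 1 then ee (fst p) t * \<alpha> u (fst p, M) else 0) *s v p)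
     = (\<Sum>p\<in>J. if fst p \<in> CC \<and> snd p = 1 then (ee (fst p) t * \<alpha> u (fst p, M)) *s v p else 0)"
    by (rule sum.cong) auto
  also have "\<dots> = (\<Sum>c\<in>CC. (ee c t * \<alpha> u (c, M)) *s v (c, 1))"
    by (subst sum_J_pick_const[of 1]) (auto dest: K_1)
  also have "\<dots> = Q1 C lam m v t u" unfolding Q1_def ee_def ..
  finally show "Q1 C lam m v t u = (\<Sum>p\<in>J. (if fst p \<in> CC \<and> snd p = 1 then ee (fst p) t * \<alpha> u (fst p, M) else 0) *s v p)"
    by simp
qed

lemma Q_lower:
  assumes "RLGE C lam m v u"
  shows "\<exists>\<delta>>0. \<forall>t. \<delta> \<le> norm (Q1 C lam m v t u)"
proof -
  obtain c0 where c0: "c0 \<in> CC" "\<alpha> u (c0, M) \<noteq> 0" using assms unfolding RLGE_def by blast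
  have "cmod (\<alpha> u (c0, M)) \<le> Bc (c0,1) * norm (Q1 C lam m v t u)" for t
  proof -
    have "cmod (\<alpha> u (c0, M)) = cmod (\<alpha> (Q1 C lam m v t u) (c0, 1))"
      using c0 by (simp add: Q_coord norm_mult norm_ee)
    also have "\<dots> \<le> Bc (c0,1) * norm (Q1 C lam m v t u)" by (rule Bc)
    finally show ?thesis .
  qed
  then have "\<forall>t. cmod (\<alpha> u (c0, M)) / Bc (c0,1) \<le> norm (Q1 C lam m v t u)"
    using Bc(1)[of "(c0,1)"] by (simp add: divide_le_eq mult.commute)
  moreover have "cmod (\<alpha> u (c0, M)) / Bc (c0,1) > 0" using c0 Bc(1)[of "(c0,1)"] by simp
  ultimately show ?thesis by blast
qed

end
lemma ratio_to_1:
  fixes a b e :: "real \<Rightarrow> real"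
  assumes ev: "eventually (\<lambda>t. \<bar>a t - b t\<bar> \<le> e t) F" and e: "(e \<longlongrightarrow> 0) F"
    and d: "d > 0" and bd: "eventually (\<lambda>t. d \<le> b t) F"
  shows "((\<lambda>t. a t / b t) \<longlongrightarrow> 1) F"
proof -
  have "((\<lambda>t. (a t - b t) / b t) \<longlongrightarrow> 0) F"
  proof (rule Lim_null_comparison)
    show "eventually (\<lambda>t. norm ((a t - b t) / b t) \<le> e t / d) F"
      using ev bd
    proof eventually_elim
      case (elim t)
      then have "b t > 0" using d by linarith
      then have "norm ((a t - b t) / b t) = \<bar>a t - b t\<bar> / b t" by (simp add: abs_div)
      also have "\<dots> \<le> \<bar>a t - b t\<bar> / d" using elim d by (intro divide_left_mono) auto
      also have "\<dots> \<le> e t / d" using elim d by (intro divide_right_mono) auto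
      finally show ?case .
    qed
    show "((\<lambda>t. e t / d) \<longlongrightarrow> 0) F" using tendsto_divide[OF e tendsto_const[of d]] d by simp
  qed
  then have "((\<lambda>t. 1 + (a t - b t) / b t) \<longlongrightarrow> 1 + 0) F" by (intro tendsto_add tendsto_const)
  moreover have "eventually (\<lambda>t. 1 + (a t - b t) / b t = a t / b t) F"
    using bd
  proof eventually_elim
    case (elim t)
    then have "b t \<noteq> 0" using d by linarith
    then show ?case by (simp add: field_simps)
  qed
  ultimately show ?thesis by (simp add: tendsto_cong)
qed

lemma SUP_diff_le:
  fixes f g :: "'a \<Rightarrow> real"
  assumes X: "X \<noteq> {}" and bf: "bdd_above (f ` X)" and bg: "bdd_above (g ` X)"
    and d: "\<And>x. x \<in> X \<Longrightarrow> \<bar>f x - g x\<bar> \<le> e"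
  shows "\<bar>(SUP x\<in>X. f x) - (SUP x\<in>X. g x)\<bar> \<le> e"
proof -
  have "(SUP x\<in>X. f x) \<le> (SUP x\<in>X. g x) + e"
  proof (rule cSUP_least[OF X])
    fix x assume x: "x \<in> X"
    have "g x \<le> (SUP x\<in>X. g x)" by (rule cSUP_upper[OF x bg])
    then show "f x \<le> (SUP x\<in>X. g x) + e" using d[OF x] by linarith
  qed
  moreover have "(SUP x\<in>X. g x) \<le> (SUP x\<in>X. f x) + e"
  proof (rule cSUP_least[OF X])
    fix x assume x: "x \<in> X"
    have "f x \<le> (SUP x\<in>X. f x)" by (rule cSUP_upper[OF x bf])
    then show "g x \<le> (SUP x\<in>X. f x) + e" using d[OF x] by linarith
  qed
  ultimately show ?thesis by linarith
qed

lemma SUP_div_const: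
  fixes f :: "'a \<Rightarrow> real"
  assumes X: "X \<noteq> {}" and bf: "bdd_above (f ` X)" and c: "c \<ge> 0"
  shows "(SUP x\<in>X. f x / c) = (SUP x\<in>X. f x) / c"
proof (cases "c = 0")
  case True then show ?thesis using X by simp
next
  case False
  then have c: "c > 0" using c by simp
  obtain B where B: "\<And>x. x \<in> X \<Longrightarrow> f x \<le> B" using bf by (auto simp: bdd_above_def)
  have bf': "bdd_above ((\<lambda>x. f x / c) ` X)"
    using B c by (intro bdd_aboveI2[of _ _ "B / c"]) (simp add: divide_right_mono)
  have "(SUP x\<in>X. f x / c) \<le> (SUP x\<in>X. f x) / c"
    by (rule cSUP_least[OF X]) (intro divide_right_mono cSUP_upper[OF _ bf], auto simp: c less_imp_le)
  moreover have "(SUP x\<in>X. f x) \<le> c * (SUP x\<in>X. f x / c)"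
  proof (rule cSUP_least[OF X])
    fix x assume x: "x \<in> X"
    have "f x / c \<le> (SUP x\<in>X. f x / c)" by (rule cSUP_upper[OF x bf'])
    then show "f x \<le> c * (SUP x\<in>X. f x / c)" using c by (simp add: divide_le_eq mult.commute)
  qed
  ultimately show ?thesis using c by (simp add: divide_le_eq mult.commute antisym)
qed

locale setting = vnorm N + jordan1 A C lam m v
  for N :: "complex^'n \<Rightarrow> real" and A :: "complex^'n^'n" and C :: "'c set" and lam m v
begin

abbreviation "W t u \<equiv> complex_of_real (1 / s t) *s expmv t A u"
abbreviation "Q t u \<equiv> Q1 C lam m v t u"

lemma eps_nonneg: "eps t \<ge> 0"
  unfolding eps_def using Bc(1) by (intro sum_nonneg mult_nonneg_nonneg) (auto simp: less_imp_le)

lemma W_close: "\<bar>N (W t u) - N (Q t u)\<bar> \<le> KN * eps t * norm u"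
proof -
  have "\<bar>N (W t u) - N (Q t u)\<bar> \<le> N (W t u - Q t u)" by (rule N_abs_diff)
  also have "\<dots> \<le> KN * norm (W t u - Q t u)" by (rule N_le)
  also have "\<dots> \<le> KN * (eps t * norm u)"
    using eps_bound[of t u] by (intro mult_left_mono) (auto simp: KN_def sum_nonneg N_nonneg)
  finally show ?thesis by (simp add: mult_ac)
qed

lemma N_expmv: "t > 0 \<Longrightarrow> N (expmv t A u) = s t * N (W t u)"
proof -
  assume t: "t > 0"
  have "expmv t A u = complex_of_real (s t) *s W t u"
    using s_pos[OF t] by (simp add: vector_smult_assoc)
  then show ?thesis using s_pos[OF t] by (simp add: N_smult norm_divide)
qed

lemma kpos: obtains k where "k > 0" "\<And>x. k * norm x \<le> N x"
proof -
  from N_ge obtain k where "k > 0" "\<forall>x. k * norm x \<le> N x" by blast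
  then show ?thesis using that by blast
qed

lemma Q_lowerN:
  assumes "RLGE C lam m v u"
  obtains d where "d > 0" "\<And>t. d \<le> N (Q t u)"
proof -
  from N_ge obtain k where k: "k > 0" "\<forall>x. k * norm x \<le> N x" by blast
  obtain \<delta> where \<delta>: "\<delta> > 0" "\<And>t. \<delta> \<le> norm (Q t u)" using Q_lower[OF assms] by blast
  have "k * \<delta> \<le> N (Q t u)" for t
    using k(2)[rule_format, of "Q t u"] mult_left_mono[OF \<delta>(2)[of t], of k] k(1) by linarith
  moreover have "k * \<delta> > 0" using k(1) \<delta>(1) by simp
  ultimately show ?thesis using that by blast
qed

lemma ratio_WQ:
  assumes "RLGE C lam m v u"
  shows "((\<lambda>t. N (W t u) / N (Q t u)) \<longlongrightarrow> 1) at_top"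
proof -
  obtain d where d: "d > 0" "\<And>t. d \<le> N (Q t u)" using Q_lowerN[OF assms] by blast
  show ?thesis
  proof (rule ratio_to_1[OF _ _ d(1)])
    show "eventually (\<lambda>t. \<bar>N (W t u) - N (Q t u)\<bar> \<le> KN * eps t * norm u) at_top"
      by (intro always_eventually allI W_close)
    show "((\<lambda>t. KN * eps t * norm u) \<longlongrightarrow> 0) at_top"
      using tendsto_mult[OF tendsto_mult[OF tendsto_const[of KN] eps_lim] tendsto_const[of "norm u"]] by simp
    show "eventually (\<lambda>t. d \<le> N (Q t u)) at_top" by (intro always_eventually allI d(2))
  qed
qed

lemma RLGE_scale: "RLGE C lam m v u \<Longrightarrow> c \<noteq> 0 \<Longrightarrow> RLGE C lam m v (c *s u)"
  unfolding RLGE_def by (auto simp: coord_smult)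

end
context setting begin

lemma yh_facts:
  assumes y0: "y0 \<noteq> 0" and Ry: "RLGE C lam m v y0"
  shows "RLGE C lam m v (normalize_vec N y0)"
proof -
  have "N y0 > 0" using y0 N_eq0[of y0] N_nonneg[of y0] by linarith
  then have "complex_of_real (1 / N y0) \<noteq> 0" by simp
  then show ?thesis unfolding normalize_vec_def by (rule RLGE_scale[OF Ry])
qed

lemma Kdir_eq: "t > 0 \<Longrightarrow> Kdir N A t y z = N (W t z) / N (W t (normalize_vec N y))"
  using s_pos[of t] by (simp add: Kdir_def N_expmv)

lemma div_swap: "(a::real) / qz / (b / qy) = (a / b) / (qz / qy)" if "qz \<noteq> 0" "qy \<noteq> 0"
  using that by (cases "b = 0") (simp_all add: field_simps)

lemma main_dir:
  assumes y0: "y0 \<noteq> 0" and Ry: "RLGE C lam m v y0" and Rz: "RLGE C lam m v z0"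
  shows "((\<lambda>t. Kdir N A t y0 z0 / (N (Q t z0) / N (Q t (normalize_vec N y0)))) \<longlongrightarrow> 1) at_top"
proof -
  define yh where "yh = normalize_vec N y0"
  have Ryh: "RLGE C lam m v yh" unfolding yh_def by (rule yh_facts[OF y0 Ry])
  obtain dz where dz: "dz > 0" "\<And>t. dz \<le> N (Q t z0)" using Q_lowerN[OF Rz] by blast
  obtain dy where dy: "dy > 0" "\<And>t. dy \<le> N (Q t yh)" using Q_lowerN[OF Ryh] by blast
  have lim: "((\<lambda>t. (N (W t z0) / N (Q t z0)) / (N (W t yh) / N (Q t yh))) \<longlongrightarrow> 1 / 1) at_top"
    by (intro tendsto_divide ratio_WQ Rz Ryh) simp
  have ev: "eventually (\<lambda>t. (N (W t z0) / N (Q t z0)) / (N (W t yh) / N (Q t yh))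
      = Kdir N A t y0 z0 / (N (Q t z0) / N (Q t yh))) at_top"
    using eventually_gt_at_top[of 0]
  proof eventually_elim
    case (elim t)
    have "N (Q t z0) \<noteq> 0" "N (Q t yh) \<noteq> 0" using dz(1) dy(1) dy(2)[of t] dz(2)[of t] by linarith+
    then show ?case unfolding Kdir_eq[OF elim] yh_def[symmetric] by (rule div_swap)
  qed
  have "((\<lambda>t. Kdir N A t y0 z0 / (N (Q t z0) / N (Q t yh))) \<longlongrightarrow> 1) at_top"
    using Lim_transform_eventually[OF lim ev] by simp
  then show ?thesis unfolding yh_def .
qed

lemma main_cond:
  assumes y0: "y0 \<noteq> 0" and z0: "N z0 = 1" and Ry: "RLGE C lam m v y0" and Rz: "RLGE C lam m v z0"
  shows "((\<lambda>t. Kcond N A t y0 / (induced_norm N (Q1 C lam m v t) / N (Q t (normalize_vec N y0)))) \<longlongrightarrow> 1) at_top"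
proof -
  define yh where "yh = normalize_vec N y0"
  define S where "S = {z. N z = 1}"
  have z0S: "z0 \<in> S" and Sne: "S \<noteq> {}" using z0 by (auto simp: S_def)
  have Ryh: "RLGE C lam m v yh" unfolding yh_def by (rule yh_facts[OF y0 Ry])
  obtain dz where dz: "dz > 0" "\<And>t. dz \<le> N (Q t z0)" using Q_lowerN[OF Rz] by blast
  obtain dy where dy: "dy > 0" "\<And>t. dy \<le> N (Q t yh)" using Q_lowerN[OF Ryh] by blast
  from N_ge obtain k where k: "k > 0" "\<forall>x. k * norm x \<le> N x" by blast
  have nz: "norm z \<le> 1 / k" if "z \<in> S" for z
  proof -
    have "k * norm z \<le> 1" using k(2)[rule_format, of z] that by (simp add: S_def)
    then show ?thesis using k(1) by (simp add: le_divide_eq mult.commute)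
  qed
  have KN0: "KN \<ge> 0" unfolding KN_def by (simp add: sum_nonneg N_nonneg)
  have BQ0: "BQ \<ge> 0" unfolding BQ_def using Bc(1) by (intro sum_nonneg mult_nonneg_nonneg) (auto simp: less_imp_le)
  define \<sigma> where "\<sigma> t = (SUP z\<in>S. N (W t z))" for t
  define \<tau> where "\<tau> t = (SUP z\<in>S. N (Q t z))" for t
  have \<tau>_eq: "induced_norm N (Q1 C lam m v t) = \<tau> t" for t
    by (simp add: induced_norm_def \<tau>_def S_def)
  have dWQ: "\<bar>N (W t z) - N (Q t z)\<bar> \<le> KN * eps t / k" if "z \<in> S" for t z
  proof -
    have "\<bar>N (W t z) - N (Q t z)\<bar> \<le> KN * eps t * norm z" by (rule W_close)
    also have "\<dots> \<le> KN * eps t * (1 / k)"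
      using nz[OF that] KN0 eps_nonneg[of t] by (intro mult_left_mono) auto
    finally show ?thesis by simp
  qed
  have bddQ: "bdd_above ((\<lambda>z. N (Q t z)) ` S)" for t
  proof (rule bdd_aboveI2)
    fix z assume z: "z \<in> S"
    have "N (Q t z) \<le> KN * norm (Q t z)" by (rule N_le)
    also have "\<dots> \<le> KN * (BQ * norm z)" using KN0 Q_upper[of t z] by (intro mult_left_mono)
    also have "\<dots> \<le> KN * (BQ * (1 / k))" using KN0 BQ0 nz[OF z] by (intro mult_left_mono) auto
    finally show "N (Q t z) \<le> KN * (BQ * (1 / k))" .
  qed
  have bddW: "bdd_above ((\<lambda>z. N (W t z)) ` S)" for t
  proof -
    obtain B where B: "\<And>z. z \<in> S \<Longrightarrow> N (Q t z) \<le> B" using bddQ[of t] by (auto simp: bdd_above_def)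
    show ?thesis
    proof (rule bdd_aboveI2)
      fix z assume z: "z \<in> S"
      show "N (W t z) \<le> B + KN * eps t / k" using B[OF z] dWQ[OF z, of t] by linarith
    qed
  qed
  have \<tau>_low: "dz \<le> \<tau> t" for t
    using dz(2)[of t] cSUP_upper[OF z0S bddQ[of t]] unfolding \<tau>_def by linarith
  have ratio: "((\<lambda>t. \<sigma> t / \<tau> t) \<longlongrightarrow> 1) at_top"
  proof (rule ratio_to_1[OF _ _ dz(1)])
    show "eventually (\<lambda>t. \<bar>\<sigma> t - \<tau> t\<bar> \<le> KN * eps t / k) at_top"
      unfolding \<sigma>_def \<tau>_def by (intro always_eventually allI SUP_diff_le Sne bddW bddQ dWQ)
    show "((\<lambda>t. KN * eps t / k) \<longlongrightarrow> 0) at_top"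
      using tendsto_divide[OF tendsto_mult[OF tendsto_const[of KN] eps_lim] tendsto_const[of k]] k(1) by simp
    show "eventually (\<lambda>t. dz \<le> \<tau> t) at_top" by (intro always_eventually allI \<tau>_low)
  qed
  have lim: "((\<lambda>t. (\<sigma> t / \<tau> t) / (N (W t yh) / N (Q t yh))) \<longlongrightarrow> 1 / 1) at_top"
    by (intro tendsto_divide ratio ratio_WQ Ryh) simp
  have ev: "eventually (\<lambda>t. (\<sigma> t / \<tau> t) / (N (W t yh) / N (Q t yh))
      = Kcond N A t y0 / (induced_norm N (Q1 C lam m v t) / N (Q t yh))) at_top"
    using eventually_gt_at_top[of 0]
  proof eventually_elim
    case (elim t)
    have "Kcond N A t y0 = (SUP z\<in>S. N (W t z) / N (W t yh))"
      unfolding Kcond_def S_def[symmetric] yh_def using Kdir_eq[OF elim] by simp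
    also have "\<dots> = \<sigma> t / N (W t yh)"
      unfolding \<sigma>_def by (rule SUP_div_const[OF Sne bddW N_nonneg])
    finally have K: "Kcond N A t y0 = \<sigma> t / N (W t yh)" .
    have "\<tau> t \<noteq> 0" "N (Q t yh) \<noteq> 0" using dz(1) \<tau>_low[of t] dy(1) dy(2)[of t] by linarith+
    then show ?case unfolding K \<tau>_eq by (rule div_swap)
  qed
  have "((\<lambda>t. Kcond N A t y0 / (induced_norm N (Q1 C lam m v t) / N (Q t yh))) \<longlongrightarrow> 1) at_top"
    using Lim_transform_eventually[OF lim ev] by simp
  then show ?thesis unfolding yh_def .
qed

end

theorem theorem5:
  fixes A :: "complex ^ 'n ^ 'n"
    and N :: "complex ^ 'n \<Rightarrow> real"
    and y0 z0 :: "complex ^ 'n"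
    and C :: "'c set" and lam :: "'c \<Rightarrow> complex" and m :: "'c \<Rightarrow> nat"
    and v :: "'c \<times> nat \<Rightarrow> complex ^ 'n"
  assumes "is_vec_norm N"
    and "is_jordan_basis A C lam m v"
    and "y0 \<noteq> 0"
    and "N z0 = 1"
    and "RLGE C lam m v y0"
    and "RLGE C lam m v z0"
  shows "((\<lambda>t. Kdir N A t y0 z0 /
              (N (Q1 C lam m v t z0) / N (Q1 C lam m v t (normalize_vec N y0)))) \<longlongrightarrow> 1) at_top \<and>
         ((\<lambda>t. Kcond N A t y0 /
              (induced_norm N (Q1 C lam m v t) / N (Q1 C lam m v t (normalize_vec N y0)))) \<longlongrightarrow> 1) at_top"
proof -
  have "C1 C lam m \<noteq> {}" using assms(5) unfolding RLGE_def by blast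
  then interpret setting N A C lam m v
    using assms(1,2) by (simp add: setting_def vnorm_def jordan1_def jordan1_axioms_def jordan_def)
  show ?thesis using main_dir[OF assms(3,5,6)] main_cond[OF assms(3,4,5,6)] by blast
qed

end
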